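(* Let $\mathbb V$ be a Schubert representation of $\widehat H_n$ with generic Schubert classes $\{\mathcal Y_w\}$ and evaluation map $\operatorname{ev}$. For $u,v\in S_n$, $\operatorname{ev}(\overline T_u\cdot\mathcal Y_v)=\operatorname{ev}(\mathcal Y_{\mathrm{id}})$ if $u=v$ and $=0$ otherwise. Moreover, for every $\mathcal Y\in\mathbb V$, $$\mathcal Y=\frac{1}{\operatorname{ev}(\mathcal Y_{\mathrm{id}})}\sum_{w\in S_n}\operatorname{ev}(\overline T_w\cdot\mathcal Y)\,\mathcal Y_w.$$
   Context: $\mathcal A_\hbar=\mathbb Q[p,q,\hbar]$. The affine Hecke algebra $\widehat H_n$ over $\mathcal A_\hbar$ is generated by $T_1,\dots,T_{n-1}$, $x_1,\dots,x_n$ with relations $(T_i+p)(T_i-q)=0$, the braid relations $T_iT_j=T_jT_i$ ($|i-j|>1$), $T_iT_{i+1}T_i=T_{i+1}T_iT_{i+1}$, $x_ix_j=x_jx_i$, $T_ix_j=x_jT_i$ ($j\ne i,i+1$), $T_ix_i=x_{i+1}T_i+(\hbar-(p-q)x_i)$, $T_ix_{i+1}=x_iT_i-(\hbar-(p-q)x_i)$. For a reduced word $w=s_{i_1}\cdots s_{i_\ell}$, $T_w=T_{i_1}\cdots T_{i_\ell}$, and $\overline T_w=\overline T_{i_1}\cdots\overline T_{i_\ell}$ with $\overline T_i=T_i+p-q$. A Schubert representation: a field $\mathbb F$ with $t_1,\dots,t_n\in\mathbb F$, a ring map $\mathcal A_\hbar\to\mathbb F$, an $\mathbb F$-vector space $\mathbb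 V$ with a $\widehat H_n$-action in which $\mathcal A_\hbar$ acts through $\mathbb F$, a distinguished $\mathcal Y_{w_0}$ ($w_0$ longest in $S_n$) such that $\mathcal Y_w:=T_{w^{-1}w_0}\cdot\mathcal Y_{w_0}$ form a basis, and an $\mathbb F$-linear $\operatorname{ev}\colon\mathbb V\to\mathbb F$ with $\operatorname{ev}(\mathcal Y_w)\ne0\iff w=\mathrm{id}$ and $\operatorname{ev}(x_i\cdot\mathcal Y_w)=t_i\operatorname{ev}(\mathcal Y_w)$. *)

theory Defs
  imports Complex_Main "HOL-Combinatorics.Transposition" "HOL-Combinatorics.Permutations"
begin

definition Sn :: "nat \<Rightarrow> (nat \<Rightarrow> nat) set" where
  "Sn n = {w. w permutes {1..n}}"

definition simple_refl :: "nat \<Rightarrow> nat \<Rightarrow> nat" where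
  "simple_refl i = transpose i (Suc i)"

definition perm_of_word :: "nat list \<Rightarrow> nat \<Rightarrow> nat" where
  "perm_of_word ws = foldr (\<lambda>i f. simple_refl i \<circ> f) ws id"

definition reduced_word :: "nat \<Rightarrow> (nat \<Rightarrow> nat) \<Rightarrow> nat list \<Rightarrow> bool" where
  "reduced_word n w ws \<longleftrightarrow> set ws \<subseteq> {1..<n} \<and> perm_of_word ws = w \<and>
     (\<forall>vs. set vs \<subseteq> {1..<n} \<and> perm_of_word vs = w \<longrightarrow> length ws \<le> length vs)"

definition w0 :: "nat \<Rightarrow> nat \<Rightarrow> nat" where
  "w0 n i = (if i \<in> {1..n} then n + 1 - i else i)"

definition word_op :: "(nat \<Rightarrow> 'v \<Rightarrow> 'v) \<Rightarrow> nat list \<Rightarrow> 'v \<Rightarrow> 'v" where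
  "word_op G ws = foldr (\<lambda>i f. G i \<circ> f) ws id"

definition T_perm :: "nat \<Rightarrow> (nat \<Rightarrow> 'v \<Rightarrow> 'v) \<Rightarrow> (nat \<Rightarrow> nat) \<Rightarrow> 'v \<Rightarrow> 'v" where
  "T_perm n T w = word_op T (SOME ws. reduced_word n w ws)"

definition Tbar :: "('f \<Rightarrow> 'v \<Rightarrow> 'v::ab_group_add) \<Rightarrow> 'f::field \<Rightarrow> 'f \<Rightarrow> (nat \<Rightarrow> 'v \<Rightarrow> 'v) \<Rightarrow> nat \<Rightarrow> 'v \<Rightarrow> 'v" where
  "Tbar scale p q T i v = T i v + scale (p - q) v"

text \<open>Action of the affine Hecke algebra on the F-vector space V (given by the images of
  the generators T_1..T_{n-1}, x_1..x_n as F-linear maps; the scalars p, q, hb in F are the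
  images of p, q, \<open>\<hbar>\<close> under the ring map).\<close>
definition hecke_action ::
  "nat \<Rightarrow> 'f::field \<Rightarrow> 'f \<Rightarrow> 'f \<Rightarrow> ('f \<Rightarrow> 'v \<Rightarrow> 'v::ab_group_add)
   \<Rightarrow> (nat \<Rightarrow> 'v \<Rightarrow> 'v) \<Rightarrow> (nat \<Rightarrow> 'v \<Rightarrow> 'v) \<Rightarrow> bool" where
  "hecke_action n p q hb scale T X \<longleftrightarrow>
     (\<forall>i\<in>{1..<n}. Vector_Spaces.linear scale scale (T i)) \<and>
     (\<forall>i\<in>{1..n}. Vector_Spaces.linear scale scale (X i)) \<and>
     (\<forall>i\<in>{1..<n}. \<forall>v. T i (T i v) + scale (p - q) (T i v) - scale (p * q) v = 0) \<and>
     (\<forall>i\<in>{1..<n}. \<forall>j\<in>{1..<n}. (i + 1 < j \<or> j + 1 < i) \<longrightarrow> (\<forall>v. T i (T j v) = T j (T i v))) \<and>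
     (\<forall>i. 1 \<le> i \<and> i + 1 < n \<longrightarrow> (\<forall>v. T i (T (i+1) (T i v)) = T (i+1) (T i (T (i+1) v)))) \<and>
     (\<forall>i\<in>{1..n}. \<forall>j\<in>{1..n}. \<forall>v. X i (X j v) = X j (X i v)) \<and>
     (\<forall>i\<in>{1..<n}. \<forall>j\<in>{1..n}. j \<noteq> i \<and> j \<noteq> i + 1 \<longrightarrow> (\<forall>v. T i (X j v) = X j (T i v))) \<and>
     (\<forall>i\<in>{1..<n}. \<forall>v. T i (X i v) = X (i+1) (T i v) + (scale hb v - scale (p - q) (X i v))) \<and>
     (\<forall>i\<in>{1..<n}. \<forall>v. T i (X (i+1) v) = X i (T i v) - (scale hb v - scale (p - q) (X i v)))"

end

theory Submission imports Defs begin

definition invs :: "nat \<Rightarrow> (nat\<Rightarrow>nat) \<Rightarrow> (nat\<times>nat) set" where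
  "invs n w = {(a,b). a \<in> {1..n} \<and> b \<in> {1..n} \<and> a < b \<and> w b < w a}"
definition ninv :: "nat \<Rightarrow> (nat\<Rightarrow>nat) \<Rightarrow> nat" where
  "ninv n w = card (invs n w)"

lemma finite_invs: "finite (invs n w)"
  by (rule finite_subset[of _ "{1..n}\<times>{1..n}"]) (auto simp: invs_def)

lemma pin: "w permutes {1..n} \<Longrightarrow> 1 \<le> x \<Longrightarrow> x \<le> n \<Longrightarrow> 1 \<le> w x \<and> w x \<le> n"
  using permutes_in_image[of w "{1..n}" x] by auto
lemma pinv: "w permutes {1..n} \<Longrightarrow> 1 \<le> x \<Longrightarrow> x \<le> n \<Longrightarrow> 1 \<le> inv w x \<and> inv w x \<le> n"
  using permutes_in_image[of "inv w" "{1..n}" x] permutes_inv[of w "{1..n}"] by auto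

lemma pin1: "w permutes {Suc 0..n} \<Longrightarrow> Suc 0 \<le> x \<Longrightarrow> x \<le> n \<Longrightarrow> Suc 0 \<le> w x"
  using pin[of w n x] by simp
lemma pin2: "w permutes {Suc 0..n} \<Longrightarrow> Suc 0 \<le> x \<Longrightarrow> x \<le> n \<Longrightarrow> w x \<le> n"
  using pin[of w n x] by simp
lemma pinv1: "w permutes {Suc 0..n} \<Longrightarrow> Suc 0 \<le> x \<Longrightarrow> x \<le> n \<Longrightarrow> Suc 0 \<le> inv w x"
  using pinv[of w n x] by simp
lemma pinv2: "w permutes {Suc 0..n} \<Longrightarrow> Suc 0 \<le> x \<Longrightarrow> x \<le> n \<Longrightarrow> inv w x \<le> n"
  using pinv[of w n x] by simp
lemmas pins = pin1 pin2 pinv1 pinv2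

lemma sr_permutes: "i \<in> {1..<n} \<Longrightarrow> simple_refl i permutes {1..n}"
  unfolding simple_refl_def by (rule permutes_swap_id) auto

lemma sr_inv: "inv (simple_refl i) = simple_refl i"
  unfolding simple_refl_def by simp

lemma sr_sr2: "simple_refl i \<circ> (simple_refl i \<circ> w) = w"
  unfolding simple_refl_def by (simp add: fun_eq_iff)

lemma sr_bij: "bij (simple_refl i)"
  unfolding simple_refl_def by simp

lemma sr_sr: "simple_refl i \<circ> simple_refl i = id"
  unfolding simple_refl_def by (simp add: fun_eq_iff)

lemma sr_sr': "simple_refl i (simple_refl i x) = x"
  unfolding simple_refl_def by simp

lemma pw_Cons[simp]: "perm_of_word (i # ws) = simple_refl i \<circ> perm_of_word ws"
  by (simp add: perm_of_word_def)
lemma pw_Nil[simp]: "perm_of_word [] = id"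
  by (simp add: perm_of_word_def)
lemma pw_snoc: "perm_of_word (ws @ [j]) = perm_of_word ws \<circ> simple_refl j"
  by (induction ws) (auto simp: perm_of_word_def)

lemma pw_permutes: "set ws \<subseteq> {1..<n} \<Longrightarrow> perm_of_word ws permutes {1..n}"
  proof (induction ws)
  case (Cons a ws)
  then have "simple_refl a \<circ> perm_of_word ws permutes {1..n}"
    using permutes_compose[OF _ sr_permutes[of a n]] by auto
  then show ?case by (simp add: o_def)
qed (auto intro: permutes_id)

lemma ninv_left_up:
  assumes P: "w permutes {1..n}" and i: "i \<in> {1..<n}" and lt: "inv w i < inv w (Suc i)"
  shows "ninv n (simple_refl i \<circ> w) = Suc (ninv n w)"
proof -
  define a0 where "a0 = inv w i"
  define b0 where "b0 = inv w (Suc i)"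
  have a0: "a0 \<in> {1..n}" "w a0 = i" using P i unfolding a0_def
    by (auto simp: permutes_inverses intro: pins)
  have b0: "b0 \<in> {1..n}" "w b0 = Suc i" using P i unfolding b0_def
    by (auto simp: permutes_inverses intro: pins)
  have wa: "\<And>a. a \<in> {1..n} \<Longrightarrow> w a = i \<longleftrightarrow> a = a0"
    using a0 P by (metis permutes_inverses(2))
  have wb: "\<And>a. a \<in> {1..n} \<Longrightarrow> w a = Suc i \<longleftrightarrow> a = b0"
    using b0 P by (metis permutes_inverses(2))
  have ab: "a0 < b0" using lt a0_def b0_def by simp
  have eq: "invs n (simple_refl i \<circ> w) = insert (a0,b0) (invs n w)"
  proof (rule set_eqI, clarify)
    fix a b
    show "(a,b) \<in> invs n (simple_refl i \<circ> w) \<longleftrightarrow> (a,b) \<in> insert (a0,b0) (invs n w)"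
      using wa[of a] wb[of a] wa[of b] wb[of b] a0 b0 ab
      unfolding invs_def simple_refl_def transpose_def by auto
  qed
  have nin: "(a0,b0) \<notin> invs n w" using a0 b0 by (auto simp: invs_def)
  show ?thesis unfolding ninv_def eq using nin finite_invs by simp
qed

lemma ninv_inv:
  assumes P: "w permutes {1..n}"
  shows "ninv n (inv w) = ninv n w"
proof -
  have "bij_betw (\<lambda>(a,b). (inv w b, inv w a)) (invs n (inv w)) (invs n w)"
  proof (rule bij_betwI[where g="\<lambda>(a,b). (w b, w a)"])
    show "(\<lambda>(a,b). (inv w b, inv w a)) \<in> invs n (inv w) \<rightarrow> invs n w"
      using P by (auto simp: invs_def permutes_inverses intro: pins)
    show "(\<lambda>(a,b). (w b, w a)) \<in> invs n w \<rightarrow> invs n (inv w)"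
      using P by (auto simp: invs_def permutes_inverses intro: pins)
    show "(case case x of (a, b) \<Rightarrow> (inv w b, inv w a) of (a, b) \<Rightarrow> (w b, w a)) = x" for x
      using P by (auto simp: permutes_inverses split: prod.splits)
    show "(case case y of (a, b) \<Rightarrow> (w b, w a) of (a, b) \<Rightarrow> (inv w b, inv w a)) = y" for y
      using P by (auto simp: permutes_inverses split: prod.splits)
  qed
  then show ?thesis unfolding ninv_def by (rule bij_betw_same_card)
qed

lemma ninv_left_down:
  assumes P: "w permutes {1..n}" and i: "i \<in> {1..<n}" and gt: "inv w i > inv w (Suc i)"
  shows "ninv n w = Suc (ninv n (simple_refl i \<circ> w))"
proof -
  let ?v = "simple_refl i \<circ> w"
  have Pv: "?v permutes {1..n}" using permutes_compose[OF P sr_permutes[OF i]] .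
  have iv: "inv ?v = inv w \<circ> simple_refl i"
    using P by (simp add: o_inv_distrib permutes_bij sr_bij sr_inv)
  have "inv ?v i < inv ?v (Suc i)" using gt unfolding iv by (simp add: simple_refl_def)
  from ninv_left_up[OF Pv i this] have "ninv n (simple_refl i \<circ> ?v) = Suc (ninv n ?v)" .
  moreover have "simple_refl i \<circ> ?v = w" by (simp add: sr_sr2)
  ultimately show ?thesis by simp
qed

lemma inv_ne: "w permutes {1..n} \<Longrightarrow> i \<in> {1..<n} \<Longrightarrow> inv w i \<noteq> inv w (Suc i)"
  by (metis n_not_Suc_n permutes_inverses(1))

lemma ninv_right:
  assumes P: "w permutes {1..n}" and j: "j \<in> {1..<n}"
  shows "w j < w (Suc j) \<Longrightarrow> ninv n (w \<circ> simple_refl j) = Suc (ninv n w)"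
    and "w j > w (Suc j) \<Longrightarrow> ninv n w = Suc (ninv n (w \<circ> simple_refl j))"
proof -
  have Pi: "inv w permutes {1..n}" using P by (rule permutes_inv)
  have Pv: "w \<circ> simple_refl j permutes {1..n}" using permutes_compose[OF sr_permutes[OF j] P] .
  have iv: "inv (w \<circ> simple_refl j) = simple_refl j \<circ> inv w"
    using P by (simp add: o_inv_distrib permutes_bij sr_bij sr_inv)
  have e1: "ninv n (w \<circ> simple_refl j) = ninv n (simple_refl j \<circ> inv w)"
    using ninv_inv[OF Pv] iv by simp
  have e2: "ninv n w = ninv n (inv w)" using ninv_inv[OF P] by simp
  have ii: "inv (inv w) = w" using P by (simp add: permutes_inv_inv)
  show "w j < w (Suc j) \<Longrightarrow> ninv n (w \<circ> simple_refl j) = Suc (ninv n w)"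
    using ninv_left_up[OF Pi j] e1 e2 ii by simp
  show "w j > w (Suc j) \<Longrightarrow> ninv n w = Suc (ninv n (w \<circ> simple_refl j))"
    using ninv_left_down[OF Pi j] e1 e2 ii by simp
qed

lemma ninv_le_length: "set ws \<subseteq> {1..<n} \<Longrightarrow> ninv n (perm_of_word ws) \<le> length ws"
proof (induction ws)
  case Nil
  have "invs n id = {}" by (auto simp: invs_def)
  then show ?case by (simp add: ninv_def id_def)
next
  case (Cons i ws)
  have P: "perm_of_word ws permutes {1..n}" using Cons.prems pw_permutes by auto
  have i: "i \<in> {1..<n}" using Cons.prems by auto
  have "ninv n (simple_refl i \<circ> perm_of_word ws) \<le> Suc (ninv n (perm_of_word ws))"
    using ninv_left_up[OF P i] ninv_left_down[OF P i] inv_ne[OF P i]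
    by (cases "inv (perm_of_word ws) i < inv (perm_of_word ws) (Suc i)") auto
  moreover have "ninv n (perm_of_word ws) \<le> length ws" using Cons by auto
  ultimately show ?case by (simp only: pw_Cons list.size)
qed

lemma ninv_id: "ninv n id = 0"
proof -
  have "invs n id = {}" by (auto simp: invs_def)
  then show ?thesis by (simp add: ninv_def id_def)
qed

lemma mono_perm_id:
  assumes P: "g permutes {1..n}" and m: "\<forall>i\<in>{1..<n}. g i < g (Suc i)"
  shows "g = id"
proof -
  have lo: "i \<le> n \<longrightarrow> i \<le> g i" if "1 \<le> i" for i
    using that
  proof (induction i rule: dec_induct)
    case base
    then show ?case using pin[OF P, of 1] by auto
  next
    case (step k)
    then show ?case using m by force
  qed
  have hi: "d < n \<longrightarrow> g (n - d) \<le> n - d" for d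
  proof (induction d)
    case 0
    then show ?case using pin[OF P, of n] by auto
  next
    case (Suc d)
    show ?case
    proof
      assume "Suc d < n"
      then have "g (n - Suc d) < g (Suc (n - Suc d))" using m by auto
      moreover have "Suc (n - Suc d) = n - d" using \<open>Suc d < n\<close> by auto
      ultimately show "g (n - Suc d) \<le> n - Suc d" using Suc \<open>Suc d < n\<close> by auto
    qed
  qed
  show ?thesis
  proof
    fix x
    show "g x = id x"
    proof (cases "x \<in> {1..n}")
      case True
      then have "g x \<le> x" using hi[of "n - x"] by auto
      then show ?thesis using lo[of x] True by auto
    next
      case False
      then show ?thesis using P by (simp add: permutes_not_in)
    qed
  qed
qed

lemma exists_word:
  "w permutes {1..n} \<Longrightarrow> \<exists>ws. set ws \<subseteq> {1..<n} \<and> perm_of_word ws = w \<and> length ws = ninv n w"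
proof (induction "ninv n w" arbitrary: w rule: less_induct)
  case less
  show ?case
  proof (cases "\<exists>i\<in>{1..<n}. inv w i > inv w (Suc i)")
    case True
    then obtain i where i: "i \<in> {1..<n}" "inv w i > inv w (Suc i)" by blast
    have e: "ninv n w = Suc (ninv n (simple_refl i \<circ> w))"
      using ninv_left_down[OF less.prems i] .
    have Pv: "simple_refl i \<circ> w permutes {1..n}" using permutes_compose[OF less.prems sr_permutes[OF i(1)]] .
    obtain ws where ws: "set ws \<subseteq> {1..<n}" "perm_of_word ws = simple_refl i \<circ> w"
        "length ws = ninv n (simple_refl i \<circ> w)"
      using less.hyps[OF _ Pv] e by auto
    have "perm_of_word (i # ws) = w" using ws(2) by (simp add: sr_sr2)
    then show ?thesis using ws i e by (intro exI[of _ "i # ws"]) auto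
  next
    case False
    then have "\<forall>i\<in>{1..<n}. inv w i < inv w (Suc i)"
      using inv_ne[OF less.prems] by (meson linorder_neqE_nat)
    then have "inv w = id" using mono_perm_id[OF permutes_inv[OF less.prems]] by blast
    then have "w = id" by (metis inv_id inv_inv_eq less.prems permutes_bij)
    then show ?thesis by (intro exI[of _ "[]"]) (auto simp: ninv_id)
  qed
qed

lemma reduced_word_iff:
  assumes P: "w permutes {1..n}"
  shows "reduced_word n w ws \<longleftrightarrow> set ws \<subseteq> {1..<n} \<and> perm_of_word ws = w \<and> length ws = ninv n w"
proof
  assume r: "reduced_word n w ws"
  obtain vs where vs: "set vs \<subseteq> {1..<n}" "perm_of_word vs = w" "length vs = ninv n w"
    using exists_word[OF P] by blast
  show "set ws \<subseteq> {1..<n} \<and> perm_of_word ws = w \<and> length ws = ninv n w"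
    using r vs ninv_le_length[of ws n] unfolding reduced_word_def by force
next
  assume "set ws \<subseteq> {1..<n} \<and> perm_of_word ws = w \<and> length ws = ninv n w"
  then show "reduced_word n w ws" unfolding reduced_word_def using ninv_le_length by force
qed

lemma some_reduced:
  assumes P: "w permutes {1..n}"
  defines "ws \<equiv> SOME ws. reduced_word n w ws"
  shows "set ws \<subseteq> {1..<n}" "perm_of_word ws = w" "length ws = ninv n w"
proof -
  have "\<exists>ws. reduced_word n w ws" using exists_word[OF P] reduced_word_iff[OF P] by blast
  then have "reduced_word n w ws" unfolding ws_def by (rule someI_ex)
  then show "set ws \<subseteq> {1..<n}" "perm_of_word ws = w" "length ws = ninv n w"
    using reduced_word_iff[OF P] by auto
qed

lemma ninv_left_le:
  assumes P: "w permutes {1..n}" and i: "i \<in> {1..<n}"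
  shows "ninv n (simple_refl i \<circ> w) \<le> Suc (ninv n w)"
  using ninv_left_up[OF P i] ninv_left_down[OF P i] inv_ne[OF P i]
  by (cases "inv w i < inv w (Suc i)") auto

lemma inv_sr_comp: "w permutes S \<Longrightarrow> inv (simple_refl i \<circ> w) = inv w \<circ> simple_refl i"
  by (simp add: o_inv_distrib permutes_bij sr_bij sr_inv)

lemma desc_of:
  assumes P: "v permutes {1..n}" and i: "i \<in> {1..<n}"
    and e: "ninv n (simple_refl i \<circ> v) = Suc (ninv n v)"
  shows "inv (simple_refl i \<circ> v) i > inv (simple_refl i \<circ> v) (Suc i)"
proof -
  have "inv v i < inv v (Suc i)"
  proof (rule ccontr)
    assume "\<not> ?thesis"
    then have "inv v i > inv v (Suc i)" using inv_ne[OF P i] by auto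
    from ninv_left_down[OF P i this] e show False by simp
  qed
  then show ?thesis unfolding inv_sr_comp[OF P] by (simp add: simple_refl_def)
qed

lemma sr_far: "Suc s < t \<or> Suc t < s \<Longrightarrow>
  simple_refl s \<circ> (simple_refl t \<circ> (simple_refl s \<circ> w)) = simple_refl t \<circ> w"
  unfolding simple_refl_def by (auto simp: fun_eq_iff transpose_def)

lemma sr_braid: "simple_refl s \<circ> (simple_refl (Suc s) \<circ> (simple_refl s \<circ> w))
   = simple_refl (Suc s) \<circ> (simple_refl s \<circ> (simple_refl (Suc s) \<circ> w))"
  unfolding simple_refl_def by (auto simp: fun_eq_iff transpose_def)

lemma word_op_Cons[simp]: "word_op G (i # ws) = G i \<circ> word_op G ws"
  by (simp add: word_op_def)
lemma word_op_Nil[simp]: "word_op G [] = id"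
  by (simp add: word_op_def)

lemma matsumoto:
  fixes G :: "nat \<Rightarrow> 'v \<Rightarrow> 'v"
  assumes comm: "\<forall>i\<in>{1..<n}. \<forall>j\<in>{1..<n}. (i + 1 < j \<or> j + 1 < i) \<longrightarrow> (\<forall>v. G i (G j v) = G j (G i v))"
    and braid: "\<forall>i. 1 \<le> i \<and> i + 1 < n \<longrightarrow> (\<forall>v. G i (G (i+1) (G i v)) = G (i+1) (G i (G (i+1) v)))"
  shows "length ws = k \<Longrightarrow> set ws \<subseteq> {1..<n} \<Longrightarrow> set ws' \<subseteq> {1..<n} \<Longrightarrow>
    perm_of_word ws' = perm_of_word ws \<Longrightarrow> length ws' = k \<Longrightarrow> ninv n (perm_of_word ws) = k \<Longrightarrow>
    word_op G ws = word_op G ws'"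
proof (induction k arbitrary: ws ws')
  case 0
  then show ?case by simp
next
  case (Suc k)
  have info: "ninv n (perm_of_word a) = k \<and> inv (perm_of_word (s#a)) s > inv (perm_of_word (s#a)) (Suc s)"
    if "length a = k" "set (s#a) \<subseteq> {1..<n}" "ninv n (perm_of_word (s#a)) = Suc k" for s a
  proof -
    have Pa: "perm_of_word a permutes {1..n}" using that pw_permutes by auto
    have s: "s \<in> {1..<n}" using that by auto
    have "ninv n (perm_of_word a) \<le> k" using ninv_le_length[of a n] that by auto
    moreover have "Suc k \<le> Suc (ninv n (perm_of_word a))"
      using ninv_left_le[OF Pa s] that by simp
    ultimately have e: "ninv n (perm_of_word a) = k" by simp
    then show ?thesis using desc_of[OF Pa s] that by simp
  qed
  have adj: "word_op G (s#a) = word_op G (Suc s#b)"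
    if A: "length a = k" "set (s#a) \<subseteq> {1..<n}" "ninv n (perm_of_word (s#a)) = Suc k"
    and B: "length b = k" "set (Suc s#b) \<subseteq> {1..<n}" "perm_of_word (Suc s#b) = perm_of_word (s#a)"
    for s a b
  proof -
    define t where "t = Suc s"
    define w where "w = perm_of_word (s#a)"
    have s: "s \<in> {1..<n}" and t: "t \<in> {1..<n}" using A B t_def by auto
    have Pw: "w permutes {1..n}" unfolding w_def using A pw_permutes by blast
    have ia: "ninv n (perm_of_word a) = k" "inv w s > inv w (Suc s)" using info[OF A] w_def by auto
    have ib: "ninv n (perm_of_word b) = k" "inv w t > inv w (Suc t)"
      using info[of b t] B A t_def w_def by auto
    define wa where "wa = perm_of_word a"
    have wa: "w = simple_refl s \<circ> wa" "wa = simple_refl s \<circ> w" unfolding w_def wa_def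
      by (auto simp: sr_sr2)
    have Pa: "wa permutes {1..n}" unfolding wa_def using A pw_permutes by auto
    have "inv wa t > inv wa (Suc t)"
      using ib(2) ia(2) unfolding wa(2) inv_sr_comp[OF Pw] by (simp add: simple_refl_def t_def)
    from ninv_left_down[OF Pa t this] have N1: "k = Suc (ninv n (simple_refl t \<circ> wa))"
      using ia(1) wa_def by simp
    define w1 where "w1 = simple_refl t \<circ> wa"
    have P1: "w1 permutes {1..n}" unfolding w1_def using permutes_compose[OF Pa sr_permutes[OF t]] .
    have iw1: "inv w1 = inv w \<circ> simple_refl s \<circ> simple_refl t"
      unfolding w1_def inv_sr_comp[OF Pa] using wa(2) inv_sr_comp[OF Pw] by simp
    have "inv w1 s > inv w1 (Suc s)"
      using ib(2) ia(2) unfolding iw1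
      by (simp add: simple_refl_def t_def)
    from ninv_left_down[OF P1 s this] N1 have N2: "k = Suc (Suc (ninv n (simple_refl s \<circ> w1)))"
      unfolding w1_def by simp
    define w2 where "w2 = simple_refl s \<circ> w1"
    have P2: "w2 permutes {1..n}" unfolding w2_def using permutes_compose[OF P1 sr_permutes[OF s]] .
    obtain c where c: "set c \<subseteq> {1..<n}" "perm_of_word c = w2" "length c = ninv n w2"
      using exists_word[OF P2] by blast
    have eqa: "word_op G a = word_op G (t # s # c)"
    proof (rule Suc.IH)
      show "perm_of_word (t # s # c) = perm_of_word a"
        using c(2) unfolding w2_def w1_def wa_def by (simp add: sr_sr2)
    qed (use A c N2 w2_def ia(1) s t in auto)
    have eqb: "word_op G b = word_op G (s # t # c)"
    proof (rule Suc.IH)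
      have "perm_of_word b = simple_refl t \<circ> w"
        using B(3) unfolding w_def t_def[symmetric] by (metis pw_Cons sr_sr2)
      then show "perm_of_word (s # t # c) = perm_of_word b"
        using c(2) unfolding w2_def w1_def wa(2) t_def by (simp add: sr_braid sr_sr2)
    qed (use B c N2 w2_def ib(1) s t in auto)
    have "G s (G t (G s v)) = G t (G s (G t v))" for v
      using braid s t unfolding t_def by auto
    then show ?thesis using eqa eqb t_def by (auto simp: fun_eq_iff)
  qed
  obtain s a where ws: "ws = s # a" using Suc.prems(1) by (cases ws) auto
  obtain t b where ws': "ws' = t # b" using Suc.prems(5) by (cases ws') auto
  have eqp: "perm_of_word (t#b) = perm_of_word (s#a)" using Suc.prems(4) unfolding ws ws' .
  have A: "length a = k" "set (s#a) \<subseteq> {1..<n}" "ninv n (perm_of_word (s#a)) = Suc k"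
    using Suc.prems(1) apply (simp add: ws)
    using Suc.prems(2) apply (simp add: ws)
    using Suc.prems(6) unfolding ws .
  have B: "length b = k" "set (t#b) \<subseteq> {1..<n}" "ninv n (perm_of_word (t#b)) = Suc k"
    using Suc.prems(5) apply (simp add: ws')
    using Suc.prems(3) apply (simp add: ws')
    using Suc.prems(6) unfolding ws eqp[symmetric] .
  have s: "s \<in> {1..<n}" and t: "t \<in> {1..<n}" using A B by auto
  consider "s = t" | "t = Suc s" | "s = Suc t" | "Suc s < t \<or> Suc t < s" by linarith
  then show ?case
  proof cases
    case 1
    have "word_op G a = word_op G b"
    proof (rule Suc.IH)
      show "perm_of_word b = perm_of_word a" using eqp 1
        by (metis pw_Cons sr_sr2)
    qed (use A B info[OF A] in auto)
    then show ?thesis using ws ws' 1 by simp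
  next
    case 2
    then show ?thesis using adj[OF A, of b] B eqp ws ws' by simp
  next
    case 3
    then show ?thesis using adj[OF B, of a] A eqp ws ws' by simp
  next
    case 4
    define w where "w = perm_of_word (s#a)"
    have Pw: "w permutes {1..n}" unfolding w_def using A pw_permutes by blast
    have ia: "ninv n (perm_of_word a) = k" "inv w s > inv w (Suc s)" using info[OF A] w_def by auto
    have ib: "ninv n (perm_of_word b) = k" "inv w t > inv w (Suc t)"
      using info[OF B] eqp w_def by auto
    define wa where "wa = perm_of_word a"
    have wa: "wa = simple_refl s \<circ> w" unfolding w_def wa_def by (auto simp: sr_sr2)
    have Pa: "wa permutes {1..n}" unfolding wa_def using A pw_permutes by auto
    have "inv wa t > inv wa (Suc t)"
      using ib(2) 4 unfolding wa inv_sr_comp[OF Pw] by (auto simp: simple_refl_def transpose_def)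
    from ninv_left_down[OF Pa t this] have N1: "k = Suc (ninv n (simple_refl t \<circ> wa))"
      using ia(1) wa_def by simp
    define w1 where "w1 = simple_refl t \<circ> wa"
    have P1: "w1 permutes {1..n}" unfolding w1_def using permutes_compose[OF Pa sr_permutes[OF t]] .
    obtain c where c: "set c \<subseteq> {1..<n}" "perm_of_word c = w1" "length c = ninv n w1"
      using exists_word[OF P1] by blast
    have eqa: "word_op G a = word_op G (t # c)"
    proof (rule Suc.IH)
      show "perm_of_word (t # c) = perm_of_word a"
        using c(2) unfolding w1_def wa_def by (simp add: sr_sr2)
    qed (use A c N1 w1_def ia(1) s t in auto)
    have eqb: "word_op G b = word_op G (s # c)"
    proof (rule Suc.IH)
      have "perm_of_word b = simple_refl t \<circ> w"
        using eqp unfolding w_def by (metis pw_Cons sr_sr2)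
      then show "perm_of_word (s # c) = perm_of_word b"
        using c(2) 4 unfolding w1_def wa by (simp add: sr_far)
    qed (use B c N1 w1_def ib(1) s t in auto)
    have "G s (G t v) = G t (G s v)" for v
      using comm s t 4 by auto
    then show ?thesis using eqa eqb ws ws' by (auto simp: fun_eq_iff)
  qed
qed

lemma word_op_snoc: "word_op G (ws @ [j]) = word_op G ws \<circ> G j"
  by (induction ws) (auto simp: word_op_def)

lemma w0_permutes: "w0 n permutes {1..n}"
proof -
  have inv: "w0 n (w0 n x) = x" for x by (auto simp: w0_def)
  show ?thesis
    unfolding permutes_def
  proof (intro conjI allI)
    show "x \<notin> {1..n} \<longrightarrow> w0 n x = x" for x by (auto simp: w0_def)
    show "\<exists>!x. w0 n x = y" for y
      by (metis inv)
  qed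
qed

lemma w0_inv: "inv (w0 n) = w0 n"
proof -
  have "w0 n \<circ> w0 n = id" by (auto simp: w0_def fun_eq_iff)
  then show ?thesis by (metis inv_unique_comp)
qed

lemma linear_add': "Vector_Spaces.linear s1 s2 f \<Longrightarrow> f (x + y) = f x + f y"
  by (simp add: Vector_Spaces.linear_iff)
lemma linear_scale': "Vector_Spaces.linear s1 s2 f \<Longrightarrow> f (s1 c x) = s2 c (f x)"
  by (simp add: Vector_Spaces.linear_iff)
lemma linear_sum': "Vector_Spaces.linear s1 s2 f \<Longrightarrow> f (sum g A) = (\<Sum>x\<in>A. f (g x))"
  by (rule additive.sum) (simp add: additive_def Vector_Spaces.linear_iff)

locale schub =
  fixes n :: nat
    and p q hb :: "'f::field_char_0"
    and scale :: "'f \<Rightarrow> 'v::ab_group_add \<Rightarrow> 'v"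
    and T X :: "nat \<Rightarrow> 'v \<Rightarrow> 'v"
    and Yw0 :: 'v
    and ev :: "'v \<Rightarrow> 'f"
    and Y :: "(nat \<Rightarrow> nat) \<Rightarrow> 'v"
  assumes vs: "vector_space scale"
    and act: "hecke_action n p q hb scale T X"
    and Y_def: "\<And>w. Y w = T_perm n T (inv w \<circ> w0 n) Yw0"
    and ev_lin: "Vector_Spaces.linear scale (*) ev"
    and ev_nz: "\<And>w. w \<in> Sn n \<Longrightarrow> ev (Y w) \<noteq> 0 \<longleftrightarrow> w = id"
begin

interpretation vs: vector_space scale by (rule vs)

lemma Tlin: "i \<in> {1..<n} \<Longrightarrow> Vector_Spaces.linear scale scale (T i)"
  using act[unfolded hecke_action_def, THEN conjunct1] by blast
lemma quad: "i \<in> {1..<n} \<Longrightarrow> T i (T i v) = scale (p * q) v - scale (p - q) (T i v)"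
proof -
  assume j: "i \<in> {1..<n}"
  have "T i (T i v) + scale (p - q) (T i v) - scale (p * q) v = 0"
    using act[unfolded hecke_action_def, THEN conjunct2, THEN conjunct2, THEN conjunct1] j by blast
  then show ?thesis by (simp add: algebra_simps)
qed
lemma comm: "\<forall>i\<in>{1..<n}. \<forall>j\<in>{1..<n}. (i + 1 < j \<or> j + 1 < i) \<longrightarrow> (\<forall>v. T i (T j v) = T j (T i v))"
  by (rule act[unfolded hecke_action_def, THEN conjunct2, THEN conjunct2, THEN conjunct2, THEN conjunct1])
lemma braid: "\<forall>i. 1 \<le> i \<and> i + 1 < n \<longrightarrow> (\<forall>v. T i (T (i+1) (T i v)) = T (i+1) (T i (T (i+1) v)))"
  by (rule act[unfolded hecke_action_def, THEN conjunct2, THEN conjunct2, THEN conjunct2, THEN conjunct2, THEN conjunct1])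

abbreviation "Tb \<equiv> Tbar scale p q T"

lemma Tb_lin: "i \<in> {1..<n} \<Longrightarrow> Vector_Spaces.linear scale scale (Tb i)"
  unfolding Vector_Spaces.linear_iff Tbar_def
  using vs linear_add'[OF Tlin] linear_scale'[OF Tlin]
  by (auto simp: vs.scale_right_distrib vs.scale_scale mult.commute)

lemma word_lin: "set ws \<subseteq> {1..<n} \<Longrightarrow> Vector_Spaces.linear scale scale (word_op Tb ws)"
proof (induction ws)
  case Nil
  then show ?case using vs.linear_id by (simp add: id_def)
next
  case (Cons i ws)
  then show ?case using Vector_Spaces.linear_compose[OF Cons.IH Tb_lin[of i]] by (simp add: comp_def)
qed

lemma Tperm_step:
  assumes P: "x permutes {1..n}" and j: "j \<in> {1..<n}" and N: "ninv n (simple_refl j \<circ> x) = Suc (ninv n x)"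
  shows "T_perm n T (simple_refl j \<circ> x) = T j \<circ> T_perm n T x"
proof -
  define c where "c = (SOME ws. reduced_word n x ws)"
  define d where "d = (SOME ws. reduced_word n (simple_refl j \<circ> x) ws)"
  have Pj: "simple_refl j \<circ> x permutes {1..n}" using permutes_compose[OF P sr_permutes[OF j]] .
  note c = some_reduced[OF P, folded c_def]
  note d = some_reduced[OF Pj, folded d_def]
  have "word_op T d = word_op T (j # c)"
    by (rule matsumoto[OF comm braid, of d "ninv n (simple_refl j \<circ> x)"]) (use c d j N in auto)
  then show ?thesis unfolding T_perm_def c_def[symmetric] d_def[symmetric] by simp
qed

lemma Sn_permutes: "v \<in> Sn n \<longleftrightarrow> v permutes {1..n}" by (simp add: Sn_def)

lemma TY_down:
  assumes v: "v permutes {1..n}" and j: "j \<in> {1..<n}" and gt: "v j > v (Suc j)"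
  shows "T j (Y v) = Y (v \<circ> simple_refl j)"
proof -
  define x where "x = inv v \<circ> w0 n"
  have P: "x permutes {1..n}" unfolding x_def by (intro permutes_compose w0_permutes permutes_inv v)
  have bi: "bij (inv v)" using permutes_bij[OF permutes_inv[OF v]] .
  have ix: "inv x = w0 n \<circ> v" unfolding x_def
    by (simp add: o_inv_distrib[OF bi permutes_bij[OF w0_permutes]] w0_inv permutes_inv_inv[OF v])
  have r: "v j \<in> {1..n}" "v (Suc j) \<in> {1..n}" using j permutes_in_image[OF v] by auto
  have "inv x j < inv x (Suc j)" unfolding ix using r gt by (auto simp: w0_def)
  from ninv_left_up[OF P j this] have N: "ninv n (simple_refl j \<circ> x) = Suc (ninv n x)" .
  have e: "inv (v \<circ> simple_refl j) \<circ> w0 n = simple_refl j \<circ> x" unfolding x_def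
    by (simp add: o_inv_distrib permutes_bij[OF v] sr_bij sr_inv o_assoc)
  have "Y (v \<circ> simple_refl j) = T_perm n T (simple_refl j \<circ> x) Yw0" using Y_def e by simp
  also have "\<dots> = T j (T_perm n T x Yw0)" using Tperm_step[OF P j N] by simp
  also have "\<dots> = T j (Y v)" using Y_def x_def by simp
  finally show ?thesis by simp
qed

lemma TY_up:
  assumes v: "v permutes {1..n}" and j: "j \<in> {1..<n}" and lt: "v j < v (Suc j)"
  shows "T j (Y v) = scale (p * q) (Y (v \<circ> simple_refl j)) - scale (p - q) (Y v)"
proof -
  define v' where "v' = v \<circ> simple_refl j"
  have P': "v' permutes {1..n}" unfolding v'_def using permutes_compose[OF sr_permutes[OF j] v] .
  have "v' j > v' (Suc j)" using lt by (simp add: v'_def simple_refl_def)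
  from TY_down[OF P' j this] have "T j (Y v') = Y (v' \<circ> simple_refl j)" .
  moreover have "v' \<circ> simple_refl j = v" unfolding v'_def by (simp add: fun_eq_iff sr_sr')
  ultimately have "T j (Y v') = Y v" by simp
  then have "T j (Y v) = T j (T j (Y v'))" by simp
  also have "\<dots> = scale (p * q) (Y v') - scale (p - q) (T j (Y v'))" by (rule quad[OF j])
  finally show ?thesis using \<open>T j (Y v') = Y v\<close> v'_def by simp
qed


lemma comp_sr_sr: "f \<circ> simple_refl j \<circ> simple_refl j = f"
  by (simp add: fun_eq_iff sr_sr')

lemma main_claim:
  "set bs \<subseteq> {1..<n} \<Longrightarrow> length bs = ninv n (perm_of_word bs) \<Longrightarrow> v \<in> Sn n \<Longrightarrow>
   ev (word_op Tb bs (Y v)) = (if perm_of_word bs = v then ev (Y id) else 0)"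
proof (induction bs arbitrary: v rule: rev_induct)
  case Nil
  then show ?case using ev_nz[OF Nil.prems(3)] by auto
next
  case (snoc j a)
  have j: "j \<in> {1..<n}" and seta: "set a \<subseteq> {1..<n}" using snoc.prems by auto
  define u' where "u' = perm_of_word a"
  have Pu: "u' permutes {1..n}" unfolding u'_def using pw_permutes[OF seta] .
  have u: "perm_of_word (a @ [j]) = u' \<circ> simple_refl j" unfolding u'_def by (rule pw_snoc)
  have Nle: "ninv n u' \<le> length a" unfolding u'_def by (rule ninv_le_length[OF seta])
  have Nu: "ninv n (u' \<circ> simple_refl j) = Suc (length a)" using snoc.prems(2) u by (simp add: comp_def)
  have ne: "u' j \<noteq> u' (Suc j)" using permutes_inj[OF Pu] by (metis inj_eq n_not_Suc_n)
  have lt: "u' j < u' (Suc j)"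
  proof (rule ccontr)
    assume "\<not> ?thesis"
    then have "u' j > u' (Suc j)" using ne by auto
    from ninv_right(2)[OF Pu j this] Nu Nle show False by simp
  qed
  from ninv_right(1)[OF Pu j lt] Nu have Na: "length a = ninv n (perm_of_word a)"
    unfolding u'_def by simp
  have IH: "\<And>v. v \<in> Sn n \<Longrightarrow> ev (word_op Tb a (Y v)) = (if u' = v then ev (Y id) else 0)"
    using snoc.IH[OF seta Na] u'_def by simp
  have Pv: "v permutes {1..n}" using snoc.prems(3) Sn_permutes by auto
  have Pvs: "v \<circ> simple_refl j \<in> Sn n" using permutes_compose[OF sr_permutes[OF j] Pv] Sn_permutes by auto
  have L: "Vector_Spaces.linear scale scale (word_op Tb a)" by (rule word_lin[OF seta])
  have neq: "u' = v \<circ> simple_refl j \<longleftrightarrow> u' \<circ> simple_refl j = v"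
    by (metis comp_sr_sr)
  have vne: "v j \<noteq> v (Suc j)" using permutes_inj[OF Pv] by (metis inj_eq n_not_Suc_n)
  have wsnoc: "word_op Tb (a @ [j]) (Y v) = word_op Tb a (Tb j (Y v))" by (simp add: word_op_snoc)
  show ?case
  proof (cases "v j > v (Suc j)")
    case True
    have "Tb j (Y v) = Y (v \<circ> simple_refl j) + scale (p - q) (Y v)"
      unfolding Tbar_def TY_down[OF Pv j True] ..
    then have "ev (word_op Tb (a @ [j]) (Y v)) =
        ev (word_op Tb a (Y (v \<circ> simple_refl j))) + (p - q) * ev (word_op Tb a (Y v))"
      unfolding wsnoc using linear_add'[OF L] linear_scale'[OF L] linear_add'[OF ev_lin]
        linear_scale'[OF ev_lin] by simp
    also have "\<dots> = (if u' = v \<circ> simple_refl j then ev (Y id) else 0)"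
    proof -
      have "u' \<noteq> v" using lt True by auto
      then show ?thesis using IH[OF Pvs] IH[OF snoc.prems(3)] by simp
    qed
    finally show ?thesis unfolding u neq .
  next
    case False
    then have vlt: "v j < v (Suc j)" using vne by auto
    have "Tb j (Y v) = scale (p * q) (Y (v \<circ> simple_refl j))"
      unfolding Tbar_def TY_up[OF Pv j vlt] by simp
    then have "ev (word_op Tb (a @ [j]) (Y v)) = (p * q) * ev (word_op Tb a (Y (v \<circ> simple_refl j)))"
      unfolding wsnoc using linear_scale'[OF L] linear_scale'[OF ev_lin] by simp
    also have "\<dots> = 0"
    proof -
      have "u' \<noteq> v \<circ> simple_refl j" using lt vlt by (auto simp: simple_refl_def)
      then show ?thesis using IH[OF Pvs] by simp
    qed
    finally show ?thesis using neq u lt vlt by (auto simp: simple_refl_def)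
  qed
qed

lemma part1: "u \<in> Sn n \<Longrightarrow> v \<in> Sn n \<Longrightarrow> ev (T_perm n Tb u (Y v)) = (if u = v then ev (Y id) else 0)"
  unfolding T_perm_def
  using main_claim[of "SOME ws. reduced_word n u ws" v] some_reduced[of u n] Sn_permutes by auto

lemma finite_Sn: "finite (Sn n)"
  unfolding Sn_def by (rule finite_permutations) simp

lemma part2:
  assumes spans: "module.span scale (Y ` Sn n) = UNIV" and inj: "inj_on Y (Sn n)"
  shows "y = scale (1 / ev (Y id)) (\<Sum>w\<in>Sn n. scale (ev (T_perm n Tb w y)) (Y w))"
proof -
  have "y \<in> vs.span (Y ` Sn n)" using spans by simp
  then obtain f where f: "y = (\<Sum>z\<in>Y ` Sn n. scale (f z) z)"
    using vs.span_finite[OF finite_imageI[OF finite_Sn]] by auto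
  define g where "g v = f (Y v)" for v
  have y: "y = (\<Sum>v\<in>Sn n. scale (g v) (Y v))"
    unfolding f g_def using sum.reindex[OF inj, of "\<lambda>z. scale (f z) z"] by simp
  define c where "c = ev (Y id)"
  have idS: "id \<in> Sn n" using Sn_permutes permutes_id by auto
  have c: "c \<noteq> 0" using ev_nz[OF idS] c_def by simp
  have ev_w: "ev (T_perm n Tb w y) = g w * c" if w: "w \<in> Sn n" for w
  proof -
    have Pw: "w permutes {1..n}" using w Sn_permutes by auto
    have L: "Vector_Spaces.linear scale scale (T_perm n Tb w)"
      unfolding T_perm_def using word_lin some_reduced(1)[OF Pw] by auto
    have "ev (T_perm n Tb w y) = (\<Sum>v\<in>Sn n. g v * ev (T_perm n Tb w (Y v)))"
      unfolding y linear_sum'[OF L] linear_sum'[OF ev_lin] linear_scale'[OF L] linear_scale'[OF ev_lin] ..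
    also have "\<dots> = (\<Sum>v\<in>Sn n. if w = v then g v * c else 0)"
      by (rule sum.cong) (auto simp: part1[OF w] c_def)
    also have "\<dots> = g w * c" using w finite_Sn by simp
    finally show ?thesis .
  qed
  have "(\<Sum>w\<in>Sn n. scale (ev (T_perm n Tb w y)) (Y w)) = (\<Sum>w\<in>Sn n. scale c (scale (g w) (Y w)))"
    by (rule sum.cong) (auto simp: ev_w vs.scale_scale mult.commute)
  also have "\<dots> = scale c y" unfolding y by (simp add: vs.scale_sum_right)
  finally show ?thesis using c c_def by (simp add: vs.scale_scale)
qed

end

theorem proposition3p7:
  fixes n :: nat
    and p q hb :: "'f::field_char_0"
    and t :: "nat \<Rightarrow> 'f"
    and scale :: "'f \<Rightarrow> 'v::ab_group_add \<Rightarrow> 'v"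
    and T X :: "nat \<Rightarrow> 'v \<Rightarrow> 'v"
    and Yw0 :: 'v
    and ev :: "'v \<Rightarrow> 'f"
    and Y :: "(nat \<Rightarrow> nat) \<Rightarrow> 'v"
  assumes vs: "vector_space scale"
    and act: "hecke_action n p q hb scale T X"
    and Y_def: "\<And>w. Y w = T_perm n T (inv w \<circ> w0 n) Yw0"
    and inj: "inj_on Y (Sn n)"
    and indep: "\<not> module.dependent scale (Y ` Sn n)"
    and spans: "module.span scale (Y ` Sn n) = UNIV"
    and ev_lin: "Vector_Spaces.linear scale (*) ev"
    and ev_nz: "\<And>w. w \<in> Sn n \<Longrightarrow> ev (Y w) \<noteq> 0 \<longleftrightarrow> w = id"
    and ev_x: "\<And>i w. i \<in> {1..n} \<Longrightarrow> w \<in> Sn n \<Longrightarrow> ev (X i (Y w)) = t i * ev (Y w)"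
  shows "(\<forall>u\<in>Sn n. \<forall>v\<in>Sn n.
            ev (T_perm n (Tbar scale p q T) u (Y v)) = (if u = v then ev (Y id) else 0))
       \<and> (\<forall>y. y = scale (1 / ev (Y id))
                 (\<Sum>w\<in>Sn n. scale (ev (T_perm n (Tbar scale p q T) w y)) (Y w)))"
proof -
  interpret S: schub n p q hb scale T X Yw0 ev Y
    by (rule schub.intro) (fact vs act Y_def ev_lin ev_nz)+
  show ?thesis
  proof (intro conjI ballI allI)
    fix u v assume "u \<in> Sn n" "v \<in> Sn n"
    then show "ev (T_perm n (Tbar scale p q T) u (Y v)) = (if u = v then ev (Y id) else 0)"
      by (rule S.part1)
  next
    fix y
    show "y = scale (1 / ev (Y id)) (\<Sum>w\<in>Sn n. scale (ev (T_perm n (Tbar scale p q T) w y)) (Y w))"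
      by (rule S.part2[OF spans inj])
  qed
qed

end
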